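(* Let $\alpha$ be a Heron angle with $0\le\alpha<\pi/2$, and let $\lambda\ge0$ be a rational number such that $\tan\alpha=\lambda^2$. Then $\alpha=0$.
   Context: An angle $\theta$ is called a Heron angle if both $\sin\theta$ and $\cos\theta$ are rational numbers. *)

theory Defs
  imports Complex_Main
begin

definition heron_angle :: "real \<Rightarrow> bool" where
  "heron_angle \<theta> \<longleftrightarrow> sin \<theta> \<in> \<rat> \<and> cos \<theta> \<in> \<rat>"

end

theory Submission imports Defs "HOL-Computational_Algebra.Nth_Powers" "HOL-Computational_Algebra.Primes" begin

lemma sq_mod4: "(n::nat)^2 mod 4 = (if even n then 0 else 1)"
proof (cases "even n")
  case True then obtain k where "n = 2*k" by blast
  then show ?thesis by (simp add: power2_eq_square)
next
  case False then obtain k where "n = 2*k+1" using oddE by blast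
  then have "n^2 = 4*(k*k+k)+1" by (simp add: power2_eq_square algebra_simps)
  then show ?thesis using False by simp
qed

lemma sqrt_nat_sq:
  fixes P Q :: nat
  assumes "coprime P Q" "P * Q = t^2" "P > 0" "Q > 0"
  obtains m n where "P = m^2" "Q = n^2" "coprime m n"
proof -
  have "is_nth_power 2 (P*Q)" using assms by auto
  then have "is_nth_power 2 P" "is_nth_power 2 Q"
    using is_nth_power_mult_coprime_nat_iff[OF assms(1)] by auto
  then obtain m n where "P = m^2" "Q = n^2" by (auto elim!: is_nth_powerE)
  moreover have "coprime m n" using assms(1) calculation by simp
  ultimately show ?thesis using that by blast
qed

lemma pyth:
  fixes a b c :: nat
  assumes eq: "a^2 + b^2 = c^2" and cp: "coprime a b" and ev: "even b" and bp: "b > 0"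
  obtains m n where "coprime m n" "c = m^2 + n^2" "b = 2*m*n" "a + n^2 = m^2"
proof -
  have oa: "odd a" using cp ev by (metis coprime_common_divisor_nat dvd_refl odd_one)
  have oc: "odd c" using eq oa ev by (metis even_add even_power zero_less_numeral)
  have "b^2 > 0" using bp by simp
  then have "a^2 < c^2" using eq by linarith
  then have "a < c" using power_less_imp_less_base by blast
  moreover have "even (c - a)" using oa oc \<open>a < c\<close> by simp
  ultimately obtain Q where cQ: "c = a + 2*Q" by (metis dvdE le_add_diff_inverse less_imp_le)
  obtain t where bt: "b = 2*t" using ev by blast
  have "4*t^2 + a^2 = (a+2*Q)^2" using eq cQ bt by (simp add: power_mult_distrib)
  then have tQ: "Q * (a+Q) = t^2" by (simp add: power2_eq_square algebra_simps)
  have "coprime a (b^2)" using cp by simp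
  then have "coprime a (4*(Q*(a+Q)))" using tQ bt by (simp add: power_mult_distrib)
  then have "coprime a Q" by simp
  then have cpQ: "coprime Q (a+Q)" by (metis coprime_iff_gcd_eq_1 gcd_add2 add.commute gcd.commute)
  have Qp: "Q > 0" using tQ bt bp by (metis add_cancel_left_left gr0I mult_0 power_eq_0_iff mult_0_right zero_less_numeral)
  obtain n m where "Q = n^2" "a+Q = m^2" "coprime n m"
    using sqrt_nat_sq[OF cpQ tQ Qp] Qp by auto
  moreover have "t = m*n" using tQ calculation
    by (metis power_mult_distrib power2_eq_imp_eq zero_le mult.commute)
  ultimately show ?thesis using that[of m n] cQ bt by (auto simp: coprime_commute)
qed

lemma not_both_odd:
  fixes x y z :: nat
  assumes "x^2 + y^2 = z^2" "odd x" "odd y"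
  shows False
proof -
  have "(x^2 + y^2) mod 4 = (x^2 mod 4 + y^2 mod 4) mod 4" by (rule mod_add_eq[symmetric])
  then have "(x^2 + y^2) mod 4 = 2" using assms sq_mod4[of x] sq_mod4[of y] by simp
  then show False using assms(1) sq_mod4[of z] by (auto split: if_splits)
qed

lemma fermat4_coprime:
  fixes z :: nat
  shows "\<And>x y. coprime x y \<Longrightarrow> x > 0 \<Longrightarrow> y > 0 \<Longrightarrow> x^4 + y^4 = z^2 \<Longrightarrow> False"
proof (induction z rule: less_induct)
  case (less z x0 y0)
  have "\<exists>x y. coprime x y \<and> x > 0 \<and> y > 0 \<and> x^4 + y^4 = z^2 \<and> even y"
  proof (cases "even y0")
    case True then show ?thesis using less.prems by blast
  next
    case False
    have "even x0"
    proof (rule ccontr)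
      assume "odd x0"
      then show False using not_both_odd[of "x0^2" "y0^2" z] False less.prems(4)
        by (simp add: power_mult[symmetric])
    qed
    then show ?thesis using less.prems by (intro exI[of _ y0] exI[of _ x0]) (auto simp: coprime_commute add.commute)
  qed
  then obtain x y where cp: "coprime x y" and xp: "x > 0" and yp: "y > 0"
    and eq: "x^4 + y^4 = z^2" and ey: "even y" by blast
  have ox: "odd x" using cp ey by (metis coprime_common_divisor_nat dvd_refl odd_one)
  have eq2: "(x^2)^2 + (y^2)^2 = z^2" using eq by (simp add: power_mult[symmetric])
  have cp2: "coprime (x^2) (y^2)" using cp by simp
  obtain m n where mn: "coprime m n" "z = m^2 + n^2" "y^2 = 2*m*n" "x^2 + n^2 = m^2"
    using pyth[OF eq2 cp2] ey yp by auto
  have np: "n > 0" using mn(3) yp by (cases "n = 0") auto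
  have en: "even n"
  proof (rule ccontr)
    assume "odd n"
    then show False using not_both_odd[of x n m] mn(4) ox by simp
  qed
  have "coprime n (m^2)" using mn(1) by (simp add: coprime_commute)
  moreover have "m^2 = n*n + x^2" using mn(4) by (simp add: power2_eq_square)
  then have "gcd n (m^2) = gcd n (x^2)" using gcd_add_mult[of n n "x^2"] by simp
  ultimately have "coprime n (x^2)" by (simp add: coprime_iff_gcd_eq_1)
  then have cpxn: "coprime x n" by (simp add: coprime_commute)
  obtain a b where ab: "coprime a b" "m = a^2 + b^2" "n = 2*a*b" "x + b^2 = a^2"
    using pyth[OF mn(4) cpxn en np] by auto
  have ap: "a > 0" and bp: "b > 0" using ab(3) np by auto
  obtain t where yt: "y = 2*t" using ey by blast
  have "4*t^2 = 4*(a*b*(a^2+b^2))" using mn(3) ab yt by (simp add: power_mult_distrib algebra_simps)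
  then have tt: "(a*b)*(a^2+b^2) = t^2" by simp
  have "gcd a (a*a + b^2) = gcd a (b^2)" by (rule gcd_add_mult)
  moreover have "gcd b (b*b + a^2) = gcd b (a^2)" by (rule gcd_add_mult)
  moreover have "coprime a (b^2)" "coprime b (a^2)" using ab(1) by (auto simp: coprime_commute)
  ultimately have "coprime a (a^2+b^2)" "coprime b (a^2+b^2)"
    by (auto simp: coprime_iff_gcd_eq_1 power2_eq_square add.commute)
  then have "coprime (a*b) (a^2+b^2)" by simp
  then obtain r w where rw: "a*b = r^2" "a^2+b^2 = w^2" "coprime r w"
    using sqrt_nat_sq[OF _ tt] ap bp by auto
  have "is_nth_power 2 (a*b)" using rw by auto
  then have "is_nth_power 2 a" "is_nth_power 2 b"
    using is_nth_power_mult_coprime_nat_iff[OF ab(1)] by auto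
  then obtain u v where uv: "a = u^2" "b = v^2" by (auto elim!: is_nth_powerE)
  have cpuv: "coprime u v" using ab(1) uv by simp
  have up: "u > 0" "v > 0" using ap bp uv by auto
  have eqw: "u^4 + v^4 = w^2" using rw(2) uv by (simp add: power_mult[symmetric])
  have wp: "w > 0" using rw(2) ap by (cases "w = 0") auto
  have "w \<le> w^2" using wp by (simp add: power2_eq_square)
  also have "\<dots> = m" using rw ab by simp
  also have "m \<le> m^2" using mn(4) xp by (simp add: power2_eq_square)
  also have "m^2 < z" using mn(2) np by simp
  finally have "w < z" .
  then show False using less.IH[OF _ cpuv up eqw] by blast
qed

lemma fermat4:
  fixes x y z :: nat
  assumes "x > 0" "y > 0" "x^4 + y^4 = z^2"
  shows False
proof -
  define d where "d = gcd x y"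
  have dp: "d > 0" using assms by (simp add: d_def)
  obtain x' y' where xy: "x = x' * d" "y = y' * d" "coprime x' y'"
    using gcd_coprime_exists[of x y] dp unfolding d_def by auto
  have "d^4 * (x'^4 + y'^4) = z^2" using assms(3) unfolding xy(1,2)
    by (simp add: power_mult_distrib algebra_simps)
  then have "(d^2)^2 dvd z^2" by (metis dvd_triv_left power_mult[symmetric] mult_2_right numeral_Bit0)
  then have "d^2 dvd z" by (metis pow_divides_pow_iff zero_less_numeral)
  then obtain z' where zz: "z = d^2 * z'" by blast
  have "d^4 * (x'^4 + y'^4) = d^4 * z'^2" using \<open>d^4 * (x'^4 + y'^4) = z^2\<close> zz
    by (simp add: power_mult_distrib power_mult[symmetric])
  then have "x'^4 + y'^4 = z'^2" using dp by simp
  moreover have "x' > 0" "y' > 0" using xy assms by auto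
  ultimately show False using fermat4_coprime xy(3) by blast
qed

theorem lemma2:
  fixes \<alpha> l :: real
  assumes "heron_angle \<alpha>"
    and "0 \<le> \<alpha>" and "\<alpha> < pi / 2"
    and "l \<in> \<rat>" and "l \<ge> 0"
    and "tan \<alpha> = l^2"
  shows "\<alpha> = 0"
proof (rule ccontr)
  assume "\<alpha> \<noteq> 0"
  then have a0: "0 < \<alpha>" using assms by simp
  have sp: "sin \<alpha> > 0" using a0 assms(3) by (intro sin_gt_zero) auto
  have cp: "cos \<alpha> > 0" using a0 assms(3) by (intro cos_gt_zero_pi) auto
  have sq: "sin \<alpha> \<in> \<rat>" "cos \<alpha> \<in> \<rat>" using assms(1) unfolding heron_angle_def by auto
  have sl: "sin \<alpha> = l^2 * cos \<alpha>" using assms(6) cp by (simp add: tan_def field_simps)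
  have "l \<noteq> 0" using sl sp by auto
  obtain p q :: nat where pq: "q \<noteq> 0" "\<bar>l\<bar> = real p / real q" using Rats_abs_nat_div_natE[OF assms(4)] by metis
  have lpq: "l = real p / real q" using pq assms(5) by simp
  have pp: "p > 0" using lpq \<open>l \<noteq> 0\<close> by (cases "p = 0") auto
  have "1 / cos \<alpha> \<in> \<rat>" using sq(2) by simp
  then obtain a b :: nat where ab: "b \<noteq> 0" "\<bar>1 / cos \<alpha>\<bar> = real a / real b"
    using Rats_abs_nat_div_natE by metis
  have ap: "a > 0" using ab cp by (cases "a = 0") auto
  have cab: "cos \<alpha> = real b / real a" using ab cp ap
    by (simp add: field_simps split: if_splits)
  have "sin \<alpha> ^ 2 + cos \<alpha> ^ 2 = 1" by simp
  then have "(l^2 * cos \<alpha>)^2 + cos \<alpha> ^2 = 1" using sl by simp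
  then have "((real p / real q)^2 * (real b / real a))^2 + (real b / real a)^2 = 1"
    using lpq cab by simp
  then have "real b^2 * (real p^4 + real q^4) = real a^2 * real q^4"
    using pq(1) ap by (simp add: field_simps power_mult_distrib power_divide)
  then have "b^2 * (p^4 + q^4) = a^2 * q^4"
    by (metis (mono_tags) of_nat_add of_nat_eq_iff of_nat_mult of_nat_power)
  then have e: "b^2*(b^2 * (p^4 + q^4)) = b^2*(a^2 * q^4)" by simp
  have e1: "(p*b)^4 + (q*b)^4 = b^2*(b^2 * (p^4 + q^4))"
    by (simp add: power_mult_distrib algebra_simps power2_eq_square power4_eq_xxxx)
  have e2: "(a*b*q^2)^2 = b^2*(a^2 * q^4)"
    by (simp add: power_mult_distrib algebra_simps power2_eq_square power4_eq_xxxx)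
  have "(p*b)^4 + (q*b)^4 = (a*b*q^2)^2" using e e1 e2 by simp
  moreover have "p*b > 0" "q*b > 0" using pp pq ab by auto
  ultimately show False using fermat4 by blast
qed

end
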